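(* Let $m\ge1$, $\mu>0$ and $\varphi:\Delta^m\to\Omega_3[m]$, $\varphi(z_1,\dots,z_m)=\operatorname{diag}(z_1,\dots,z_m)$. Then $f:M_{\Delta^m}(\mu)\to M_{\Omega_3[m]}(\mu)$, $f(z,w)=(\varphi(z),w)$, is a totally geodesic Kähler immersion.
   Context: $\Omega_3[m]=\{Z\in M_m(\mathbb C): Z=Z^T,\ I_m-ZZ^*>0\}$ with generic norm $N(Z,Z)=\det(I_m-ZZ^* )$. $\Delta^m$ is the unit polydisk with $N_{\Delta^m}(z,z)=\prod_j(1-|z_j|^2)$. For a domain $\Omega$ with generic norm $N_\Omega$ and $\mu>0$: $M_\Omega(\mu)=\{(z,w)\in\Omega\times\mathbb C:|w|^2<N_\Omega^\mu(z,z)\}$ with Kähler metric $\omega(\mu)=\frac i2\partial\bar\partial(-\log(N_\Omega^\mu(z,z)-|w|^2))$. A Kähler immersion is a holomorphic map pulling back the target metric to the source metric. *)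

theory Defs
  imports "HOL-Analysis.Analysis"
begin

text \<open>Points of the ambient complex vector spaces are elements of real normed vector
spaces 'a; the complex structure is given explicitly by a complex scalar action sc.\<close>

definition holo_on ::
  "(complex \<Rightarrow> 'a::real_normed_vector \<Rightarrow> 'a) \<Rightarrow> (complex \<Rightarrow> 'b::real_normed_vector \<Rightarrow> 'b)
   \<Rightarrow> 'a set \<Rightarrow> ('a \<Rightarrow> 'b) \<Rightarrow> bool" where
  "holo_on sa sb U f \<longleftrightarrow>
     (\<forall>p\<in>U. \<exists>L. (f has_derivative L) (at p) \<and> (\<forall>c v. L (sa c v) = sb c (L v)))"

text \<open>Metric of the Kaehler form (i/2) d dbar psi evaluated on a tangent vector v at p:
  sum g_{a bbar} v_a conj(v_b) = d_t dbar_t psi(p + t v) at t = 0 = (1/4) Laplacian in t.\<close>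

definition kform :: "(complex \<Rightarrow> 'a::real_normed_vector \<Rightarrow> 'a) \<Rightarrow> ('a \<Rightarrow> real) \<Rightarrow> 'a \<Rightarrow> 'a \<Rightarrow> real" where
  "kform sc psi p v =
     (deriv (deriv (\<lambda>x. psi (p + sc (complex_of_real x) v))) 0
      + deriv (deriv (\<lambda>y. psi (p + sc (\<i> * complex_of_real y) v))) 0) / 4"

text \<open>Associated Riemannian metric (real part of the Hermitian metric), by polarisation.\<close>

definition rmetric :: "(complex \<Rightarrow> 'a::real_normed_vector \<Rightarrow> 'a) \<Rightarrow> ('a \<Rightarrow> real) \<Rightarrow> 'a \<Rightarrow> 'a \<Rightarrow> 'a \<Rightarrow> real" where
  "rmetric sc psi p u v = (kform sc psi p (u + v) - kform sc psi p (u - v)) / 4"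

text \<open>Geodesics of a metric G on a manifold M, open in the (real) linear subspace V
  (its tangent space), on an open parameter interval (a,b): the Euler--Lagrange equations
  of the energy, d/dt G(gamma',w) = 1/2 (D_w G)(gamma',gamma') for every w in V.\<close>

definition geodesic ::
  "'a::real_normed_vector set \<Rightarrow> 'a set \<Rightarrow> ('a \<Rightarrow> 'a \<Rightarrow> 'a \<Rightarrow> real) \<Rightarrow> (real \<Rightarrow> 'a) \<Rightarrow> real \<Rightarrow> real \<Rightarrow> bool" where
  "geodesic M V G \<gamma> a b \<longleftrightarrow> a < b \<and> (\<forall>t\<in>{a<..<b}. \<gamma> t \<in> M) \<and>
     (\<exists>\<gamma>'. \<forall>t\<in>{a<..<b}. (\<gamma> has_vector_derivative \<gamma>' t) (at t) \<and> \<gamma>' t \<in> V \<and>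
        (\<forall>w\<in>V. ((\<lambda>s. G (\<gamma> s) (\<gamma>' s) w) has_real_derivative
                  (deriv (\<lambda>r. G (\<gamma> t + r *\<^sub>R w) (\<gamma>' t) (\<gamma>' t)) 0 / 2)) (at t)))"

definition kahler_immersion ::
  "'a::real_normed_vector set \<Rightarrow> 'a set \<Rightarrow> (complex \<Rightarrow> 'a \<Rightarrow> 'a) \<Rightarrow> ('a \<Rightarrow> real) \<Rightarrow>
   'b::real_normed_vector set \<Rightarrow> (complex \<Rightarrow> 'b \<Rightarrow> 'b) \<Rightarrow> ('b \<Rightarrow> real) \<Rightarrow> ('a \<Rightarrow> 'b) \<Rightarrow> bool" where
  "kahler_immersion M1 V1 s1 psi1 M2 s2 psi2 f \<longleftrightarrow>
     f ` M1 \<subseteq> M2 \<and> holo_on s1 s2 M1 f \<and>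
     (\<forall>p\<in>M1. \<forall>L. (f has_derivative L) (at p) \<longrightarrow>
        (\<forall>v\<in>V1. kform s2 psi2 (f p) (L v) = kform s1 psi1 p v))"

definition totally_geodesic ::
  "'a::real_normed_vector set \<Rightarrow> 'a set \<Rightarrow> ('a \<Rightarrow> 'a \<Rightarrow> 'a \<Rightarrow> real) \<Rightarrow>
   'b::real_normed_vector set \<Rightarrow> 'b set \<Rightarrow> ('b \<Rightarrow> 'b \<Rightarrow> 'b \<Rightarrow> real) \<Rightarrow> ('a \<Rightarrow> 'b) \<Rightarrow> bool" where
  "totally_geodesic M1 V1 G1 M2 V2 G2 f \<longleftrightarrow>
     (\<forall>\<gamma> a b. geodesic M1 V1 G1 \<gamma> a b \<longrightarrow> geodesic M2 V2 G2 (f \<circ> \<gamma>) a b)"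

definition polydisk :: "(complex^'m) set" where
  "polydisk = {z. \<forall>i. cmod (z$i) < 1}"

definition N_poly :: "complex^'m \<Rightarrow> real" where
  "N_poly z = (\<Prod>i\<in>UNIV. 1 - (cmod (z$i))^2)"

definition cadj :: "complex^'m^'m \<Rightarrow> complex^'m^'m" where
  "cadj Z = (\<chi> i j. cnj (Z$j$i))"

definition pos_def_herm :: "complex^'m^'m \<Rightarrow> bool" where
  "pos_def_herm A \<longleftrightarrow> (\<forall>v::complex^'m. v \<noteq> 0 \<longrightarrow>
      0 < Re (\<Sum>i\<in>UNIV. \<Sum>j\<in>UNIV. cnj (v$i) * A$i$j * v$j))"

definition Omega3 :: "(complex^'m^'m) set" where
  "Omega3 = {Z. transpose Z = Z \<and> pos_def_herm (mat 1 - Z ** cadj Z)}"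

definition N_Omega3 :: "complex^'m^'m \<Rightarrow> real" where
  "N_Omega3 Z = Re (det (mat 1 - Z ** cadj Z))"

definition hartogs :: "'a set \<Rightarrow> ('a \<Rightarrow> real) \<Rightarrow> real \<Rightarrow> ('a \<times> complex) set" where
  "hartogs \<Omega> N \<mu> = {(z, w). z \<in> \<Omega> \<and> (cmod w)^2 < N z powr \<mu>}"

definition hpot :: "('a \<Rightarrow> real) \<Rightarrow> real \<Rightarrow> 'a \<times> complex \<Rightarrow> real" where
  "hpot N \<mu> = (\<lambda>(z, w). - ln (N z powr \<mu> - (cmod w)^2))"

definition sc_src :: "complex \<Rightarrow> (complex^'m) \<times> complex \<Rightarrow> (complex^'m) \<times> complex" where
  "sc_src c = (\<lambda>(z, w). ((\<chi> i. c * z$i), c * w))"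

definition sc_tgt :: "complex \<Rightarrow> (complex^'m^'m) \<times> complex \<Rightarrow> (complex^'m^'m) \<times> complex" where
  "sc_tgt c = (\<lambda>(Z, w). ((\<chi> i j. c * Z$i$j), c * w))"

definition sym_tangent :: "((complex^'m^'m) \<times> complex) set" where
  "sym_tangent = {(Z, w). transpose Z = Z}"

definition diag_map :: "complex^'m \<Rightarrow> complex^'m^'m" where
  "diag_map z = (\<chi> i j. if i = j then z$i else 0)"

end

theory Submission
  imports Defs
begin


primrec sm :: "nat \<Rightarrow> 'a::real_normed_vector set \<Rightarrow> ('a \<Rightarrow> 'b::real_normed_field) \<Rightarrow> bool" where
  "sm 0 U f = True"
| "sm (Suc n) U f = ((\<forall>p\<in>U. f differentiable (at p)) \<and>
      (\<forall>v. sm n U (\<lambda>p. frechet_derivative f (at p) v)))"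

abbreviation "fd f p \<equiv> frechet_derivative f (at p)"

lemma sm_SucD1: "sm (Suc n) U f \<Longrightarrow> p \<in> U \<Longrightarrow> f differentiable (at p)"
  by auto
lemma sm_SucD2: "sm (Suc n) U f \<Longrightarrow> sm n U (\<lambda>p. fd f p v)"
  by auto
lemma sm_SucI: "(\<And>p. p \<in> U \<Longrightarrow> f differentiable (at p)) \<Longrightarrow> (\<And>v. sm n U (\<lambda>p. fd f p v)) \<Longrightarrow> sm (Suc n) U f"
  by auto

declare sm.simps(2)[simp del]

lemma sm_mono: "sm (Suc n) U f \<Longrightarrow> sm n U f"
proof (induction n arbitrary: f)
  case 0 then show ?case by simp
next
  case (Suc n)
  show ?case
    by (rule sm_SucI) (use Suc sm_SucD1 sm_SucD2 in blast)+
qed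

lemma sm_le: "sm n U f \<Longrightarrow> k \<le> n \<Longrightarrow> sm k U f"
proof (induction n arbitrary: k)
  case 0 then show ?case by simp
next
  case (Suc n) show ?case
  proof (cases "k = Suc n")
    case True then show ?thesis using Suc.prems by simp
  next
    case False then have "k \<le> n" using Suc.prems by simp
    then show ?thesis using Suc.IH sm_mono Suc.prems(1) by blast
  qed
qed

lemma sm_subset: "sm n U f \<Longrightarrow> V \<subseteq> U \<Longrightarrow> sm n V f"
proof (induction n arbitrary: f)
  case 0 then show ?case by simp
next
  case (Suc n) show ?case
    by (rule sm_SucI) (use Suc sm_SucD1 sm_SucD2 in blast)+
qed

lemma sm_cong: "sm n U f \<Longrightarrow> open U \<Longrightarrow> (\<And>p. p \<in> U \<Longrightarrow> f p = g p) \<Longrightarrow> sm n U g"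
proof (induction n arbitrary: f g)
  case 0 then show ?case by simp
next
  case (Suc n)
  have df: "\<forall>p\<in>U. f differentiable (at p)" using Suc.prems(1) sm_SucD1 by blast
  have d: "\<forall>p\<in>U. g differentiable (at p)"
  proof
    fix p assume p: "p \<in> U"
    then have "(f has_derivative fd f p) (at p)" using df frechet_derivative_works by blast
    then have "(g has_derivative fd f p) (at p)"
      by (rule has_derivative_transform_within_open[OF _ Suc.prems(2) p Suc.prems(3)])
    then show "g differentiable (at p)" unfolding differentiable_def by blast
  qed
  have e: "\<And>p v. p \<in> U \<Longrightarrow> fd f p v = fd g p v"
  proof -
    fix p v assume p: "p \<in> U"
    have "fd f p = fd g p"
      by (rule frechet_derivative_transform_within_open[OF _ Suc.prems(2) p Suc.prems(3)]) (use df p in blast)+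
    then show "fd f p v = fd g p v" by simp
  qed
  have "sm n U (\<lambda>p. fd g p v)" for v
  proof (rule Suc.IH[of "\<lambda>p. fd f p v"])
    show "sm n U (\<lambda>p. fd f p v)" using Suc.prems(1) by (rule sm_SucD2)
  qed (use Suc.prems(2) e in auto)
  then show ?case using d by (intro sm_SucI) auto
qed

lemma sm_const: "sm n U (\<lambda>x. c)"
proof (induction n arbitrary: c)
  case 0 then show ?case by simp
next
  case (Suc n) show ?case
    by (rule sm_SucI) (simp_all add: Suc)
qed

lemma sm_blin: "bounded_linear L \<Longrightarrow> sm n U L"
proof (induction n)
  case 0 then show ?case by simp
next
  case (Suc n)
  have "\<And>p. fd L p = L" using Suc.prems
    by (metis bounded_linear_imp_has_derivative frechet_derivative_at)
  then show ?case using Suc.prems sm_const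
    by (intro sm_SucI) (auto intro: bounded_linear_imp_differentiable)
qed

lemma fd_eq: "(f has_derivative F) (at p) \<Longrightarrow> fd f p v = F v"
  using frechet_derivative_at by metis

lemma sm_D: "sm (Suc n) U f \<Longrightarrow> p \<in> U \<Longrightarrow> (f has_derivative fd f p) (at p)"
  using sm_SucD1 frechet_derivative_works by blast

lemma sm_add: "sm n U f \<Longrightarrow> sm n U g \<Longrightarrow> open U \<Longrightarrow> sm n U (\<lambda>x. f x + g x)"
proof (induction n arbitrary: f g)
  case 0 then show ?case by simp
next
  case (Suc n)
  have e: "fd (\<lambda>x. f x + g x) p v = fd f p v + fd g p v" if "p \<in> U" for p v
    using has_derivative_add[OF sm_D[OF Suc.prems(1) that] sm_D[OF Suc.prems(2) that]] fd_eq by blast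
  show ?case
  proof (rule sm_SucI)
    show "(\<lambda>x. f x + g x) differentiable at p" if "p \<in> U" for p
      using has_derivative_add[OF sm_D[OF Suc.prems(1) that] sm_D[OF Suc.prems(2) that]]
      unfolding differentiable_def by blast
    show "sm n U (\<lambda>p. fd (\<lambda>x. f x + g x) p v)" for v
      by (rule sm_cong[OF Suc.IH]) (use Suc.prems sm_SucD2 e in auto)
  qed
qed

lemma sm_mult: "sm n U f \<Longrightarrow> sm n U g \<Longrightarrow> open U \<Longrightarrow> sm n U (\<lambda>x. f x * g x)"
proof (induction n arbitrary: f g)
  case 0 then show ?case by simp
next
  case (Suc n)
  have e: "fd (\<lambda>x. f x * g x) p v = f p * fd g p v + fd f p v * g p" if "p \<in> U" for p v
    using has_derivative_mult[OF sm_D[OF Suc.prems(1) that] sm_D[OF Suc.prems(2) that]] fd_eq by blast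
  show ?case
  proof (rule sm_SucI)
    show "(\<lambda>x. f x * g x) differentiable at p" if "p \<in> U" for p
      using has_derivative_mult[OF sm_D[OF Suc.prems(1) that] sm_D[OF Suc.prems(2) that]]
      unfolding differentiable_def by blast
    fix v
    have "sm n U (\<lambda>p. f p * fd g p v + fd f p v * g p)"
      by (intro sm_add Suc.IH sm_mono[OF Suc.prems(1)] sm_mono[OF Suc.prems(2)] sm_SucD2[OF Suc.prems(1)] sm_SucD2[OF Suc.prems(2)] Suc.prems(3))
    then show "sm n U (\<lambda>p. fd (\<lambda>x. f x * g x) p v)"
      by (rule sm_cong) (use Suc.prems e in auto)
  qed
qed

lemma sm_blin_comp: "sm n U f \<Longrightarrow> bounded_linear h \<Longrightarrow> open U \<Longrightarrow> sm n U (\<lambda>x. h (f x))"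
proof (induction n arbitrary: f)
  case 0 then show ?case by simp
next
  case (Suc n)
  have e: "fd (\<lambda>x. h (f x)) p v = h (fd f p v)" if "p \<in> U" for p v
    using bounded_linear.has_derivative[OF Suc.prems(2) sm_D[OF Suc.prems(1) that]] fd_eq by blast
  show ?case
  proof (rule sm_SucI)
    show "(\<lambda>x. h (f x)) differentiable at p" if "p \<in> U" for p
      using bounded_linear.has_derivative[OF Suc.prems(2) sm_D[OF Suc.prems(1) that]]
      unfolding differentiable_def by blast
    fix v
    have "sm n U (\<lambda>p. h (fd f p v))"
      by (intro Suc.IH) (use Suc.prems sm_SucD2 in auto)
    then show "sm n U (\<lambda>p. fd (\<lambda>x. h (f x)) p v)"
      by (rule sm_cong) (use Suc.prems e in auto)
  qed
qed

lemma sm_scale: "sm n U f \<Longrightarrow> open U \<Longrightarrow> sm n U (\<lambda>x. c * f x)"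
  using sm_mult[OF sm_const] by blast

lemma sm_minus: "sm n U f \<Longrightarrow> open U \<Longrightarrow> sm n U (\<lambda>x. - f x)"
  using sm_scale[of n U f "-1"] by simp

lemma sm_diff: "sm n U f \<Longrightarrow> sm n U g \<Longrightarrow> open U \<Longrightarrow> sm n U (\<lambda>x. f x - g x)"
  using sm_add[OF _ sm_minus] by (simp add: )

lemma sm_sum: "finite S \<Longrightarrow> (\<And>i. i \<in> S \<Longrightarrow> sm n U (f i)) \<Longrightarrow> open U \<Longrightarrow> sm n U (\<lambda>x. \<Sum>i\<in>S. f i x)"
  by (induction S rule: finite_induct) (auto intro: sm_add sm_const)

lemma sm_prod: "finite S \<Longrightarrow> (\<And>i. i \<in> S \<Longrightarrow> sm n U (f i)) \<Longrightarrow> open U \<Longrightarrow> sm n U (\<lambda>x. \<Prod>i\<in>S. f i x)"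
  by (induction S rule: finite_induct) (auto intro: sm_mult sm_const)



lemma fd_real_lin: "(g::real\<Rightarrow>real) differentiable (at y) \<Longrightarrow> fd g y t = t * fd g y 1"
proof -
  assume "g differentiable (at y)"
  then have "linear (fd g y)" by (rule linear_frechet_derivative)
  then have "fd g y (t *\<^sub>R 1) = t *\<^sub>R fd g y 1" by (rule linear_scale)
  then show ?thesis by simp
qed

lemma sm_rcomp: "sm n S (g::real\<Rightarrow>real) \<Longrightarrow> sm n U (f::'a::real_normed_vector\<Rightarrow>real) \<Longrightarrow>
   open U \<Longrightarrow> (\<And>p. p \<in> U \<Longrightarrow> f p \<in> S) \<Longrightarrow> sm n U (\<lambda>x. g (f x))"
proof (induction n arbitrary: f g)
  case 0 then show ?case by simp
next
  case (Suc n)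
  have hd: "((\<lambda>x. g (f x)) has_derivative (\<lambda>v. fd g (f p) (fd f p v))) (at p)" if "p \<in> U" for p
    by (rule has_derivative_compose[OF sm_D[OF Suc.prems(2) that] sm_D[OF Suc.prems(1) Suc.prems(4)[OF that]]])
  have e: "fd (\<lambda>x. g (f x)) p v = fd f p v * (\<lambda>y. fd g y 1) (f p)" if "p \<in> U" for p v
    using fd_eq[OF hd[OF that]] fd_real_lin[OF sm_SucD1[OF Suc.prems(1) Suc.prems(4)[OF that]], of "fd f p v"] by simp
  show ?case
  proof (rule sm_SucI)
    show "(\<lambda>x. g (f x)) differentiable at p" if "p \<in> U" for p
      using hd[OF that] unfolding differentiable_def by blast
    fix v
    have "sm n U (\<lambda>p. fd f p v * (\<lambda>y. fd g y 1) (f p))"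
    proof (rule sm_mult[OF sm_SucD2[OF Suc.prems(2)] _ Suc.prems(3)])
      show "sm n U (\<lambda>p. (\<lambda>y. fd g y 1) (f p))"
        by (rule Suc.IH[OF sm_SucD2[OF Suc.prems(1)] sm_mono[OF Suc.prems(2)] Suc.prems(3) Suc.prems(4)])
    qed
    then show "sm n U (\<lambda>p. fd (\<lambda>x. g (f x)) p v)"
      by (rule sm_cong) (use Suc.prems e in auto)
  qed
qed

lemma sm_powr: "sm n {0<..} (\<lambda>x::real. x powr a)"
proof (induction n arbitrary: a)
  case 0 then show ?case by simp
next
  case (Suc n)
  have hd: "((\<lambda>x::real. x powr a) has_derivative (\<lambda>v. a * p powr (a - 1) * v)) (at p)" if "p \<in> {0<..}" for p
    using has_real_derivative_powr[of p a] that
    by (auto simp: has_field_derivative_def)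
  show ?case
  proof (rule sm_SucI)
    show "(\<lambda>x::real. x powr a) differentiable at p" if "p \<in> {0<..}" for p
      using hd[OF that] unfolding differentiable_def by blast
    fix v
    have "sm n {0<..} (\<lambda>p::real. a * p powr (a - 1) * v)"
      by (intro sm_mult[OF sm_scale[OF Suc.IH]] sm_const) auto
    then show "sm n {0<..} (\<lambda>p. fd (\<lambda>x::real. x powr a) p v)"
      by (rule sm_cong) (use fd_eq[OF hd] in auto)
  qed
qed

lemma sm_ln: "sm n {0<..} (\<lambda>x::real. ln x)"
proof (cases n)
  case 0 then show ?thesis by simp
next
  case (Suc m)
  have hd: "((\<lambda>x::real. ln x) has_derivative (\<lambda>v. p powr (-1) * v)) (at p)" if "p \<in> {0<..}" for p
    using DERIV_ln[of p] that
    by (auto simp: has_field_derivative_def powr_minus)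
  show ?thesis unfolding Suc
  proof (rule sm_SucI)
    show "(\<lambda>x::real. ln x) differentiable at p" if "p \<in> {0<..}" for p
      using hd[OF that] unfolding differentiable_def by blast
    fix v
    have "sm m {0<..} (\<lambda>p::real. p powr (-1) * v)"
      by (intro sm_mult sm_powr sm_const) auto
    then show "sm m {0<..} (\<lambda>p. fd (\<lambda>x::real. ln x) p v)"
      by (rule sm_cong) (use fd_eq[OF hd] in auto)
  qed
qed




lemma line_deriv:
  fixes F :: "'a::real_normed_vector \<Rightarrow> real"
  assumes "(F has_derivative F') (at (p + x *\<^sub>R v))"
  shows "((\<lambda>x. F (p + x *\<^sub>R v)) has_real_derivative F' v) (at x)"
proof -
  have l: "((\<lambda>x. p + x *\<^sub>R v) has_derivative (\<lambda>h. h *\<^sub>R v)) (at x)"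
    by (auto intro!: derivative_eq_intros)
  have "((\<lambda>x. F (p + x *\<^sub>R v)) has_derivative (\<lambda>h. F' (h *\<^sub>R v))) (at x)"
    by (rule has_derivative_compose[OF l assms])
  moreover have "linear F'" using assms has_derivative_linear by blast
  ultimately show ?thesis
    by (intro has_derivative_imp_has_field_derivative) (auto simp: linear_scale)
qed

definition B2 :: "('a::real_normed_vector \<Rightarrow> real) \<Rightarrow> 'a \<Rightarrow> 'a \<Rightarrow> 'a \<Rightarrow> real" where
  "B2 psi p v w = fd (\<lambda>q. fd psi q v) p w"

lemma open_line: fixes p :: "'a::real_normed_vector" shows "open U \<Longrightarrow> open {x::real. p + x *\<^sub>R v \<in> U}"
proof -
  assume "open U"
  have "continuous_on UNIV (\<lambda>x::real. p + x *\<^sub>R v)" by (intro continuous_on_add continuous_on_const continuous_on_scaleR continuous_on_id)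
  then show ?thesis using \<open>open U\<close> open_vimage[of U "\<lambda>x::real. p + x *\<^sub>R v"] by (simp add: vimage_def)
qed

lemma second_line:
  fixes psi :: "'a::real_normed_vector \<Rightarrow> real"
  assumes sm: "sm 2 U psi" and U: "open U" and p: "p \<in> U"
  shows "deriv (deriv (\<lambda>x. psi (p + x *\<^sub>R v))) 0 = B2 psi p v v"
proof -
  define S where "S = {x::real. p + x *\<^sub>R v \<in> U}"
  have S: "open S" "0 \<in> S" using open_line[OF U] p by (auto simp: S_def)
  have sm1: "sm (Suc 1) U psi" using sm by (simp add: numeral_2_eq_2)
  have d1: "deriv (\<lambda>x. psi (p + x *\<^sub>R v)) x = fd psi (p + x *\<^sub>R v) v" if "x \<in> S" for x
    by (rule DERIV_imp_deriv, rule line_deriv, rule sm_D[OF sm1]) (use that in \<open>auto simp: S_def\<close>)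
  have "deriv (deriv (\<lambda>x. psi (p + x *\<^sub>R v))) 0 = deriv (\<lambda>x. fd psi (p + x *\<^sub>R v) v) 0"
    by (rule deriv_cong_ev[OF _ refl]) (use S d1 eventually_nhds_in_open in \<open>blast intro: eventually_mono\<close>)
  also have "\<dots> = B2 psi p v v"
  proof (rule DERIV_imp_deriv)
    have "sm (Suc 0) U (\<lambda>q. fd psi q v)" using sm_SucD2[OF sm1] by simp
    then have "((\<lambda>q. fd psi q v) has_derivative fd (\<lambda>q. fd psi q v) p) (at (p + 0 *\<^sub>R v))"
      using sm_D p by simp
    then show "((\<lambda>x. fd psi (p + x *\<^sub>R v) v) has_real_derivative B2 psi p v v) (at 0)"
      unfolding B2_def by (rule line_deriv)
  qed
  finally show ?thesis .
qed

lemma B2_lin1: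
  fixes psi :: "'a::real_normed_vector \<Rightarrow> real"
  assumes sm: "sm 2 U psi" and U: "open U" and p: "p \<in> U"
  shows "B2 psi p (a *\<^sub>R v1 + b *\<^sub>R v2) w = a * B2 psi p v1 w + b * B2 psi p v2 w"
proof -
  have sm1: "sm (Suc 1) U psi" using sm by (simp add: numeral_2_eq_2)
  have g: "sm (Suc 0) U (\<lambda>q. fd psi q v)" for v using sm_SucD2[OF sm1] by simp
  have hd: "((\<lambda>q. a * fd psi q v1 + b * fd psi q v2) has_derivative
      (\<lambda>w. a * fd (\<lambda>q. fd psi q v1) p w + b * fd (\<lambda>q. fd psi q v2) p w)) (at p)"
    by (intro has_derivative_add has_derivative_mult_right sm_D[OF g] p)
  have eq: "a * fd psi q v1 + b * fd psi q v2 = fd psi q (a *\<^sub>R v1 + b *\<^sub>R v2)" if "q \<in> U" for q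
  proof -
    have "linear (fd psi q)" using linear_frechet_derivative sm_SucD1[OF sm1 that] by blast
    then show ?thesis by (simp add: linear_add linear_scale)
  qed
  have "((\<lambda>q. fd psi q (a *\<^sub>R v1 + b *\<^sub>R v2)) has_derivative
      (\<lambda>w. a * fd (\<lambda>q. fd psi q v1) p w + b * fd (\<lambda>q. fd psi q v2) p w)) (at p)"
    by (rule has_derivative_transform_within_open[OF hd U p eq])
  then show ?thesis unfolding B2_def by (simp add: fd_eq)
qed

lemma B2_lin2:
  fixes psi :: "'a::real_normed_vector \<Rightarrow> real"
  assumes sm: "sm 2 U psi" and U: "open U" and p: "p \<in> U"
  shows "linear (B2 psi p v)"
proof -
  have sm1: "sm (Suc 1) U psi" using sm by (simp add: numeral_2_eq_2)
  have g: "sm (Suc 0) U (\<lambda>q. fd psi q v)" using sm_SucD2[OF sm1] by simp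
  show ?thesis unfolding B2_def
    by (rule linear_frechet_derivative, rule sm_SucD1[OF g p])
qed




locale scs =
  fixes sc :: "complex \<Rightarrow> 'a::real_normed_vector \<Rightarrow> 'a"
  assumes s1: "\<And>x v. sc (complex_of_real x) v = x *\<^sub>R v"
    and s2: "\<And>y v. sc (\<i> * complex_of_real y) v = y *\<^sub>R sc \<i> v"
    and s3: "linear (sc \<i>)"
begin

abbreviation "J \<equiv> sc \<i>"

lemma kform_B:
  fixes psi :: "'a \<Rightarrow> real"
  assumes sm: "sm 2 U psi" and U: "open U" and p: "p \<in> U"
  shows "kform sc psi p v = (B2 psi p v v + B2 psi p (J v) (J v)) / 4"
  unfolding kform_def s1 s2 second_line[OF sm U p] ..

lemma B2_rules:
  fixes psi :: "'a \<Rightarrow> real"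
  assumes sm: "sm 2 U psi" and U: "open U" and p: "p \<in> U"
  shows "B2 psi p (x + y) w = B2 psi p x w + B2 psi p y w"
    "B2 psi p (x - y) w = B2 psi p x w - B2 psi p y w"
    "B2 psi p (c *\<^sub>R x) w = c * B2 psi p x w"
    "B2 psi p w (x + y) = B2 psi p w x + B2 psi p w y"
    "B2 psi p w (x - y) = B2 psi p w x - B2 psi p w y"
    "B2 psi p w (c *\<^sub>R x) = c * B2 psi p w x"
proof -
  show "B2 psi p (x + y) w = B2 psi p x w + B2 psi p y w"
    using B2_lin1[OF sm U p, of 1 x 1 y w] by simp
  show "B2 psi p (x - y) w = B2 psi p x w - B2 psi p y w"
    using B2_lin1[OF sm U p, of 1 x "-1" y w] by simp
  show "B2 psi p (c *\<^sub>R x) w = c * B2 psi p x w"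
    using B2_lin1[OF sm U p, of c x 0 y w] by simp
  have l: "linear (B2 psi p w)" by (rule B2_lin2[OF sm U p])
  show "B2 psi p w (x + y) = B2 psi p w x + B2 psi p w y" using l by (simp add: linear_add)
  show "B2 psi p w (x - y) = B2 psi p w x - B2 psi p w y" using l by (simp add: linear_diff)
  show "B2 psi p w (c *\<^sub>R x) = c * B2 psi p w x" using l by (simp add: linear_scale)
qed

lemma rmetric_B:
  fixes psi :: "'a \<Rightarrow> real"
  assumes sm: "sm 2 U psi" and U: "open U" and p: "p \<in> U"
  shows "rmetric sc psi p u v = (B2 psi p u v + B2 psi p v u + B2 psi p (J u) (J v) + B2 psi p (J v) (J u)) / 8"
proof -
  have j: "J (u + v) = J u + J v" "J (u - v) = J u - J v"
    using s3 by (simp_all add: linear_add linear_diff)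
  show ?thesis unfolding rmetric_def kform_B[OF sm U p] j B2_rules[OF sm U p]
    by (simp add: field_simps)
qed

lemma rmetric_linear:
  fixes psi :: "'a \<Rightarrow> real"
  assumes sm: "sm 2 U psi" and U: "open U" and p: "p \<in> U"
  shows "linear (\<lambda>v. rmetric sc psi p u v)"
proof (rule linearI)
  fix x y :: 'a and c :: real
  have j: "J (x + y) = J x + J y" "J (c *\<^sub>R x) = c *\<^sub>R J x"
    using s3 by (simp_all add: linear_add linear_scale)
  show "rmetric sc psi p u (x + y) = rmetric sc psi p u x + rmetric sc psi p u y"
    unfolding rmetric_B[OF sm U p] j B2_rules[OF sm U p] by (simp add: algebra_simps add_divide_distrib)
  show "rmetric sc psi p u (c *\<^sub>R x) = c *\<^sub>R rmetric sc psi p u x"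
    unfolding rmetric_B[OF sm U p] j B2_rules[OF sm U p] by (simp add: algebra_simps)
qed

lemma rmetric_der:
  fixes psi :: "'a \<Rightarrow> real"
  assumes sm: "sm 3 U psi" and U: "open U" and P: "P \<in> U"
  shows "\<exists>dq. linear dq \<and> (\<forall>w. deriv (\<lambda>r. rmetric sc psi (P + r *\<^sub>R w) u u) 0 = dq w)"
proof -
  define \<Phi> where "\<Phi> p = (B2 psi p u u + B2 psi p (J u) (J u)) / 4" for p
  have sm3: "sm (Suc (Suc (Suc 0))) U psi" using sm unfolding numeral_3_eq_3 .
  have sm2: "sm 2 U psi" using sm_mono[OF sm3] unfolding numeral_2_eq_2 .
  have b: "sm (Suc 0) U (\<lambda>p. B2 psi p x x)" for x
    unfolding B2_def by (rule sm_SucD2[OF sm_SucD2[OF sm3]])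
  have e\<Phi>: "\<Phi> = (\<lambda>p. (B2 psi p u u + B2 psi p (J u) (J u)) * (1/4))"
    by (simp add: \<Phi>_def fun_eq_iff)
  have "sm (Suc 0) U \<Phi>" unfolding e\<Phi>
    by (rule sm_mult[OF sm_add[OF b b U] sm_const U])
  then have hd: "(\<Phi> has_derivative fd \<Phi> P) (at P)" using sm_D P by blast
  have eq: "rmetric sc psi p u u = \<Phi> p" if "p \<in> U" for p
    unfolding rmetric_B[OF sm2 U that] \<Phi>_def by simp
  have "deriv (\<lambda>r. rmetric sc psi (P + r *\<^sub>R w) u u) 0 = fd \<Phi> P w" for w
  proof -
    define S where "S = {x::real. P + x *\<^sub>R w \<in> U}"
    have S: "open S" "0 \<in> S" using open_line[OF U] P by (auto simp: S_def)
    have "deriv (\<lambda>r. rmetric sc psi (P + r *\<^sub>R w) u u) 0 = deriv (\<lambda>r. \<Phi> (P + r *\<^sub>R w)) 0"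
    proof (rule deriv_cong_ev[OF _ refl])
      have "eventually (\<lambda>r. r \<in> S) (nhds 0)" by (rule eventually_nhds_in_open[OF S])
      then show "eventually (\<lambda>r. rmetric sc psi (P + r *\<^sub>R w) u u = \<Phi> (P + r *\<^sub>R w)) (nhds 0)"
        by (rule eventually_mono) (simp add: S_def eq)
    qed
    also have "\<dots> = fd \<Phi> P w"
      by (rule DERIV_imp_deriv, rule line_deriv) (use hd in simp)
    finally show ?thesis .
  qed
  moreover have "linear (fd \<Phi> P)" using hd has_derivative_linear by blast
  ultimately show ?thesis by blast
qed

end




lemma cscaleR: "r *\<^sub>R (z::complex) = complex_of_real r * z"
  by (simp add: scaleR_conv_of_real)

lemma scs_tgt: "scs (sc_tgt :: complex \<Rightarrow> (complex^'m^'m) \<times> complex \<Rightarrow> _)"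
proof (rule scs.intro)
  show "sc_tgt (complex_of_real x) v = x *\<^sub>R v" for x and v :: "(complex^'m^'m) \<times> complex"
    by (cases v) (simp add: sc_tgt_def vec_eq_iff cscaleR)
  show "sc_tgt (\<i> * complex_of_real y) v = y *\<^sub>R sc_tgt \<i> v" for y and v :: "(complex^'m^'m) \<times> complex"
    by (cases v) (simp add: sc_tgt_def vec_eq_iff cscaleR)
  show "linear (sc_tgt \<i> :: (complex^'m^'m) \<times> complex \<Rightarrow> _)"
    by (rule linearI) (auto simp: sc_tgt_def vec_eq_iff cscaleR case_prod_unfold algebra_simps)
qed

lemma scs_src: "scs (sc_src :: complex \<Rightarrow> (complex^'m) \<times> complex \<Rightarrow> _)"
proof (rule scs.intro)
  show "sc_src (complex_of_real x) v = x *\<^sub>R v" for x and v :: "(complex^'m) \<times> complex"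
    by (cases v) (simp add: sc_src_def vec_eq_iff cscaleR)
  show "sc_src (\<i> * complex_of_real y) v = y *\<^sub>R sc_src \<i> v" for y and v :: "(complex^'m) \<times> complex"
    by (cases v) (simp add: sc_src_def vec_eq_iff cscaleR)
  show "linear (sc_src \<i> :: (complex^'m) \<times> complex \<Rightarrow> _)"
    by (rule linearI) (auto simp: sc_src_def vec_eq_iff cscaleR case_prod_unfold algebra_simps)
qed

definition fmap :: "(complex^'m) \<times> complex \<Rightarrow> (complex^'m^'m) \<times> complex" where
  "fmap = (\<lambda>(z, w). (diag_map z, w))"

lemma fmap_linear: "linear fmap"
  by (rule linearI) (auto simp: fmap_def diag_map_def vec_eq_iff case_prod_unfold)

lemma fmap_blin: "bounded_linear fmap"
  using fmap_linear linear_conv_bounded_linear by blast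

lemma fmap_sc: "sc_tgt c (fmap v) = fmap (sc_src c v)"
  by (cases v) (simp add: fmap_def sc_tgt_def sc_src_def diag_map_def vec_eq_iff)

definition sg :: "'m \<Rightarrow> 'm \<Rightarrow> complex" where "sg k i = (if i = k then -1 else 1)"

definition Tk :: "'m \<Rightarrow> (complex^'m^'m) \<times> complex \<Rightarrow> (complex^'m^'m) \<times> complex" where
  "Tk k = (\<lambda>(Z, w). ((\<chi> i j. sg k i * sg k j * Z$i$j), w))"

lemma sg_sq: "sg k i * sg k i = 1" by (simp add: sg_def)

lemma Tk_linear: "linear (Tk k)"
  by (rule linearI) (auto simp: Tk_def vec_eq_iff case_prod_unfold algebra_simps)

lemma Tk_sc: "sc_tgt c (Tk k v) = Tk k (sc_tgt c v)"
  by (cases v) (simp add: Tk_def sc_tgt_def vec_eq_iff algebra_simps)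

lemma Tk_fmap: "Tk k (fmap x) = fmap x"
  by (cases x) (auto simp: Tk_def fmap_def diag_map_def vec_eq_iff sg_def)

lemma kform_pull:
  assumes add: "\<And>x y. \<phi> (x + y) = \<phi> x + \<phi> y"
    and sc: "\<And>c v. s2 c (\<phi> v) = \<phi> (s1 c v)" and ps: "\<And>x. psi2 (\<phi> x) = psi1 x"
  shows "kform s2 psi2 (\<phi> p) (\<phi> v) = kform s1 psi1 p v"
  unfolding kform_def sc add[symmetric] ps ..

lemma rmetric_pull:
  assumes lin: "linear \<phi>"
    and sc: "\<And>c v. s2 c (\<phi> v) = \<phi> (s1 c v)" and ps: "\<And>x. psi2 (\<phi> x) = psi1 x"
  shows "rmetric s2 psi2 (\<phi> p) (\<phi> u) (\<phi> v) = rmetric s1 psi1 p u v"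
proof -
  have add: "\<And>x y. \<phi> (x + y) = \<phi> x + \<phi> y" using lin by (simp add: linear_add)
  have "\<phi> u + \<phi> v = \<phi> (u + v)" "\<phi> u - \<phi> v = \<phi> (u - v)" using lin by (simp_all add: linear_add linear_diff)
  then show ?thesis unfolding rmetric_def using kform_pull[of \<phi> s2 s1 psi2 psi1, OF add sc ps] by simp
qed

lemma sum_if_left: fixes a :: "'n::finite \<Rightarrow> 'a::comm_ring_1" shows "(\<Sum>k\<in>UNIV. (if i = k then a k else 0) * b k) = a i * b i"
proof -
  have "(\<Sum>k\<in>UNIV. (if i = k then a k else 0) * b k) = (\<Sum>k\<in>UNIV. if i = k then a k * b k else 0)"
    by (rule sum.cong) auto
  also have "\<dots> = a i * b i" by (simp add: sum.delta sum.delta')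
  finally show ?thesis .
qed

lemma sum_if_right: fixes a :: "'n::finite \<Rightarrow> 'a::comm_ring_1" shows "(\<Sum>k\<in>UNIV. b k * (if k = j then a k else 0)) = b j * a j"
proof -
  have "(\<Sum>k\<in>UNIV. b k * (if k = j then a k else 0)) = (\<Sum>k\<in>UNIV. if k = j then b k * a k else 0)"
    by (rule sum.cong) auto
  also have "\<dots> = b j * a j" by (simp add: sum.delta sum.delta')
  finally show ?thesis .
qed

lemma diag_mult_left: "(\<chi> i j. if i = j then s i else 0) ** (A::'a::comm_ring_1^'n^'n) = (\<chi> i j. s i * A$i$j)"
  by (simp add: matrix_matrix_mult_def vec_eq_iff sum_if_left)

lemma diag_mult_right: "(A::'a::comm_ring_1^'n^'n) ** (\<chi> i j. if i = j then s i else 0) = (\<chi> i j. A$i$j * s j)"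
  by (simp add: matrix_matrix_mult_def vec_eq_iff sum_if_right)

lemma det_scale_rc: "det (\<chi> i j. s i * s j * (A::'a::comm_ring_1^'n^'n)$i$j) = (\<Prod>i\<in>UNIV. s i)^2 * det A"
proof -
  let ?D = "(\<chi> i j. if i = j then s i else 0) :: 'a^'n^'n"
  have "(\<chi> i j. s i * s j * A$i$j) = ?D ** A ** ?D"
    by (simp add: diag_mult_left diag_mult_right vec_eq_iff algebra_simps)
  moreover have "det ?D = (\<Prod>i\<in>UNIV. s i)" by (subst det_diagonal) auto
  ultimately show ?thesis by (simp add: det_mul power2_eq_square algebra_simps)
qed

lemma cnj_sg: "cnj (sg k i) = sg k i" by (simp add: sg_def)

lemma prod_sg_sq: "(\<Prod>i\<in>UNIV. sg k i)^2 = 1"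
  by (simp add: power2_eq_square prod.distrib[symmetric] sg_sq)

lemma NO_Tk: "N_Omega3 (\<chi> i j. sg k i * sg k j * Z$i$j) = N_Omega3 Z"
proof -
  let ?Z' = "(\<chi> i j. sg k i * sg k j * Z$i$j)"
  have M: "mat 1 - ?Z' ** cadj ?Z' = (\<chi> i j. sg k i * sg k j * (mat 1 - Z ** cadj Z)$i$j)"
  proof -
    have "(mat 1 - ?Z' ** cadj ?Z') $ i $ j = sg k i * sg k j * (mat 1 - Z ** cadj Z)$i$j" for i j
    proof -
      have "(?Z' ** cadj ?Z') $ i $ j = (\<Sum>l\<in>UNIV. sg k i * sg k j * (sg k l * sg k l) * (Z$i$l * cnj (Z$j$l)))"
        by (simp add: matrix_matrix_mult_def cadj_def cnj_sg algebra_simps)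
      also have "\<dots> = sg k i * sg k j * (Z ** cadj Z) $ i $ j"
        by (simp add: sg_sq matrix_matrix_mult_def cadj_def sum_distrib_left)
      finally have "(?Z' ** cadj ?Z') $ i $ j = sg k i * sg k j * (Z ** cadj Z) $ i $ j" .
      moreover have "(mat 1 :: complex^'a^'a) $ i $ j = sg k i * sg k j * (mat 1 :: complex^'a^'a) $ i $ j"
        by (simp add: mat_def sg_sq)
      ultimately show ?thesis by (simp add: algebra_simps)
    qed
    then show ?thesis by (simp add: vec_eq_iff)
  qed
  show ?thesis unfolding N_Omega3_def M det_scale_rc prod_sg_sq by simp
qed

lemma psi_Tk: "hpot N_Omega3 \<mu> (Tk k x) = hpot N_Omega3 \<mu> x"
  by (cases x) (simp add: hpot_def Tk_def NO_Tk)

lemma NO_diag: "N_Omega3 (diag_map z) = N_poly z"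
proof -
  have e: "(mat 1 - diag_map z ** cadj (diag_map z)) $ i $ j =
      (if i = j then complex_of_real (1 - (cmod (z$i))^2) else 0)" for i j
  proof -
    have c: "cnj (if j = k then z$j else 0) = (if j = k then cnj (z$j) else 0)" for k by simp
    have "(diag_map z ** cadj (diag_map z)) $ i $ j = (\<Sum>k\<in>UNIV. (if i = k then z$i else 0) * (if j = k then cnj (z$j) else 0))"
      unfolding matrix_matrix_mult_def cadj_def diag_map_def by (simp only: vec_lambda_beta c)
    also have "\<dots> = z$i * (if j = i then cnj (z$j) else 0)"
      by (rule sum_if_left[of i "\<lambda>k. z$i" "\<lambda>k. if j = k then cnj (z$j) else 0"])
    also have "\<dots> = (if i = j then z$i * cnj (z$i) else 0)" by auto
    moreover have "z$i * cnj (z$i) = complex_of_real ((cmod (z$i))^2)" by (rule complex_norm_square[symmetric])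
    ultimately show ?thesis by (auto simp: mat_def)
  qed
  have "det (mat 1 - diag_map z ** cadj (diag_map z)) = (\<Prod>i\<in>UNIV. complex_of_real (1 - (cmod (z$i))^2))"
  proof -
    have "det (mat 1 - diag_map z ** cadj (diag_map z)) = (\<Prod>i\<in>UNIV. (mat 1 - diag_map z ** cadj (diag_map z))$i$i)"
      by (rule det_diagonal) (simp only: e, simp)
    also have "\<dots> = (\<Prod>i\<in>UNIV. complex_of_real (1 - (cmod (z$i))^2))"
      by (simp only: e, simp)
    finally show ?thesis .
  qed
  then have d2: "det (mat 1 - diag_map z ** cadj (diag_map z)) = complex_of_real (\<Prod>i\<in>UNIV. 1 - (cmod (z$i))^2)"
    by (simp only: of_real_prod)
  show ?thesis unfolding N_Omega3_def N_poly_def d2 Re_complex_of_real ..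
qed

lemma psi_fmap: "hpot N_Omega3 \<mu> (fmap x) = hpot N_poly \<mu> x"
  by (cases x) (simp add: hpot_def fmap_def NO_diag)




lemma sm_cont: "sm (Suc n) U f \<Longrightarrow> continuous_on U f"
  by (rule differentiable_imp_continuous_on, rule differentiable_at_imp_differentiable_on) (rule sm_SucD1)

type_synonym 'm E2 = "(complex^'m^'m) \<times> complex"

lemma sm_entry: "sm n UNIV (\<lambda>x::'m::finite E2. fst x $ i $ k)"
  by (rule sm_blin) (intro bounded_linear_compose[OF bounded_linear_vec_nth] bounded_linear_fst)

lemma sm_entry_cnj: "sm n UNIV (\<lambda>x::'m::finite E2. cnj (fst x $ i $ k))"
  by (rule sm_blin_comp[OF sm_entry bounded_linear_cnj open_UNIV])

lemma sm_M: "sm n UNIV (\<lambda>x::'m::finite E2. (mat 1 - fst x ** cadj (fst x)) $ i $ j)"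
proof -
  have "sm n UNIV (\<lambda>x::'m E2. (mat 1 :: complex^'m^'m) $ i $ j - (\<Sum>k\<in>UNIV. fst x $ i $ k * cnj (fst x $ j $ k)))"
    by (rule sm_diff[OF sm_const _ open_UNIV], rule sm_sum, simp, rule sm_mult[OF sm_entry sm_entry_cnj open_UNIV], rule open_UNIV)
  then show ?thesis by (simp add: matrix_matrix_mult_def cadj_def)
qed

lemma sm_N: "sm n UNIV (\<lambda>x::'m::finite E2. N_Omega3 (fst x))"
proof -
  have "sm n UNIV (\<lambda>x::'m E2. \<Sum>p\<in>{p. p permutes (UNIV::'m set)}. of_int (sign p) * (\<Prod>i\<in>UNIV. (mat 1 - fst x ** cadj (fst x)) $ i $ p i))"
    by (rule sm_sum, simp add: finite_permutations, rule sm_mult[OF sm_const _ open_UNIV], rule sm_prod, simp, rule sm_M, rule open_UNIV, rule open_UNIV)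
  then have "sm n UNIV (\<lambda>x::'m E2. Re (det (mat 1 - fst x ** cadj (fst x))))"
    unfolding det_def by (rule sm_blin_comp[OF _ bounded_linear_Re open_UNIV])
  then show ?thesis unfolding N_Omega3_def .
qed

lemma sm_w: "sm n UNIV (\<lambda>x::'m::finite E2. (cmod (snd x))^2)"
proof -
  have r: "sm n UNIV (\<lambda>x::'m E2. Re (snd x))" "sm n UNIV (\<lambda>x::'m E2. Im (snd x))"
    by (rule sm_blin, intro bounded_linear_compose[OF bounded_linear_Re] bounded_linear_compose[OF bounded_linear_Im] bounded_linear_snd)+
  have "sm n UNIV (\<lambda>x::'m E2. Re (snd x) * Re (snd x) + Im (snd x) * Im (snd x))"
    by (rule sm_add[OF sm_mult[OF r(1) r(1) open_UNIV] sm_mult[OF r(2) r(2) open_UNIV] open_UNIV])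
  moreover have "(\<lambda>x::'m E2. (cmod (snd x))^2) = (\<lambda>x. Re (snd x) * Re (snd x) + Im (snd x) * Im (snd x))"
    by (rule ext, subst cmod_power2, simp only: power2_eq_square)
  ultimately show ?thesis by simp
qed

definition U2 :: "real \<Rightarrow> ('m::finite E2) set" where
  "U2 \<mu> = {x. 0 < N_Omega3 (fst x) \<and> 0 < N_Omega3 (fst x) powr \<mu> - (cmod (snd x))^2}"

lemma U2_open: "open (U2 \<mu> :: ('m::finite E2) set)"
proof -
  define V where "V = {x::'m E2. 0 < N_Omega3 (fst x)}"
  have V: "open V" unfolding V_def
    by (rule open_Collect_less[OF continuous_on_const sm_cont[OF sm_N]])
  have "sm (Suc 0) V (\<lambda>x::'m E2. N_Omega3 (fst x) powr \<mu> - (cmod (snd x))^2)"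
    by (rule sm_diff[OF sm_rcomp[OF sm_powr sm_subset[OF sm_N] V] sm_subset[OF sm_w] V]) (auto simp: V_def)
  then have "continuous_on V (\<lambda>x::'m E2. N_Omega3 (fst x) powr \<mu> - (cmod (snd x))^2)" by (rule sm_cont)
  then have "open ((\<lambda>x::'m E2. N_Omega3 (fst x) powr \<mu> - (cmod (snd x))^2) -` {0<..} \<inter> V)"
    by (rule continuous_on_open_vimage[OF V, THEN iffD1, rule_format, OF _ open_greaterThan])
  moreover have "U2 \<mu> = (\<lambda>x::'m E2. N_Omega3 (fst x) powr \<mu> - (cmod (snd x))^2) -` {0<..} \<inter> V"
    by (auto simp: U2_def V_def)
  ultimately show ?thesis by simp
qed

lemma sm_psi2: "sm n (U2 \<mu>) (hpot N_Omega3 \<mu> :: 'm::finite E2 \<Rightarrow> real)"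
proof -
  have a: "sm n (U2 \<mu>) (\<lambda>x::'m E2. N_Omega3 (fst x) powr \<mu> - (cmod (snd x))^2)"
    by (rule sm_diff[OF sm_rcomp[OF sm_powr sm_subset[OF sm_N] U2_open] sm_subset[OF sm_w] U2_open]) (auto simp: U2_def)
  have "sm n (U2 \<mu>) (\<lambda>x::'m E2. - ln (N_Omega3 (fst x) powr \<mu> - (cmod (snd x))^2))"
    by (rule sm_minus[OF sm_rcomp[OF sm_ln a U2_open] U2_open]) (auto simp: U2_def)
  then show ?thesis
    by (rule sm_cong[OF _ U2_open]) (simp add: hpot_def case_prod_unfold)
qed




lemma diag_M: "(mat 1 - diag_map z ** cadj (diag_map z)) $ i $ j =
      (if i = j then complex_of_real (1 - (cmod (z$i))^2) else 0)"
proof -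
  have c: "cnj (if j = k then z$j else 0) = (if j = k then cnj (z$j) else 0)" for k by simp
  have "(diag_map z ** cadj (diag_map z)) $ i $ j = (\<Sum>k\<in>UNIV. (if i = k then z$i else 0) * (if j = k then cnj (z$j) else 0))"
    unfolding matrix_matrix_mult_def cadj_def diag_map_def by (simp only: vec_lambda_beta c)
  also have "\<dots> = z$i * (if j = i then cnj (z$j) else 0)"
    by (rule sum_if_left[of i "\<lambda>k. z$i" "\<lambda>k. if j = k then cnj (z$j) else 0"])
  also have "\<dots> = (if i = j then z$i * cnj (z$i) else 0)" by auto
  moreover have "z$i * cnj (z$i) = complex_of_real ((cmod (z$i))^2)" by (rule complex_norm_square[symmetric])
  ultimately show ?thesis by (auto simp: mat_def)
qed

lemma diag_Omega3: "z \<in> polydisk \<Longrightarrow> diag_map z \<in> Omega3"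
proof -
  assume z: "z \<in> polydisk"
  have "transpose (diag_map z) = diag_map z" by (simp add: transpose_def diag_map_def vec_eq_iff)
  moreover have "pos_def_herm (mat 1 - diag_map z ** cadj (diag_map z))"
    unfolding pos_def_herm_def
  proof (intro allI impI)
    fix v :: "complex^'a" assume "v \<noteq> 0"
    then obtain i0 where i0: "v$i0 \<noteq> 0" by (auto simp: vec_eq_iff)
    have c: "0 < 1 - (cmod (z$i))^2" for i
    proof -
      have "cmod (z$i) < 1" using z by (simp add: polydisk_def)
      then have "(cmod (z$i))^2 < 1" by (simp add: power_less_one_iff abs_less_iff)
      then show ?thesis by simp
    qed
    have in_sum: "(\<Sum>j\<in>UNIV. cnj (v$i) * (mat 1 - diag_map z ** cadj (diag_map z))$i$j * v$j)
        = complex_of_real ((1 - (cmod (z$i))^2) * (cmod (v$i))^2)" for i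
    proof -
      have "(\<Sum>j\<in>UNIV. cnj (v$i) * (mat 1 - diag_map z ** cadj (diag_map z))$i$j * v$j)
          = (\<Sum>j\<in>UNIV. if j = i then cnj (v$i) * complex_of_real (1 - (cmod (z$i))^2) * v$i else 0)"
        by (rule sum.cong[OF refl]) (simp only: diag_M, auto)
      also have "\<dots> = cnj (v$i) * complex_of_real (1 - (cmod (z$i))^2) * v$i" by simp
      also have "\<dots> = complex_of_real (1 - (cmod (z$i))^2) * (v$i * cnj (v$i))" by (simp add: algebra_simps)
      also have "\<dots> = complex_of_real ((1 - (cmod (z$i))^2) * (cmod (v$i))^2)"
        by (simp only: complex_norm_square[symmetric] of_real_mult)
      finally show ?thesis .
    qed
    have "Re (\<Sum>i\<in>UNIV. \<Sum>j\<in>UNIV. cnj (v$i) * (mat 1 - diag_map z ** cadj (diag_map z))$i$j * v$j)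
        = (\<Sum>i\<in>UNIV. (1 - (cmod (z$i))^2) * (cmod (v$i))^2)"
      by (simp only: in_sum Re_sum Re_complex_of_real)
    also have "\<dots> > 0"
    proof (rule sum_pos2[of UNIV i0])
      show "0 < (1 - (cmod (z$i0))^2) * (cmod (v$i0))^2" using c i0 by simp
      show "\<And>i. i \<in> UNIV \<Longrightarrow> 0 \<le> (1 - (cmod (z$i))^2) * (cmod (v$i))^2"
        using c by (simp add: less_imp_le)
    qed simp_all
    finally show "0 < Re (\<Sum>i\<in>UNIV. \<Sum>j\<in>UNIV. cnj (v$i) * (mat 1 - diag_map z ** cadj (diag_map z))$i$j * v$j)" .
  qed
  ultimately show ?thesis by (simp add: Omega3_def)
qed

lemma Npoly_pos: "z \<in> polydisk \<Longrightarrow> 0 < N_poly z"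
proof -
  assume z: "z \<in> polydisk"
  have "0 < 1 - (cmod (z$i))^2" for i
  proof -
    have "cmod (z$i) < 1" using z by (simp add: polydisk_def)
    then have "(cmod (z$i))^2 < 1" by (simp add: power_less_one_iff abs_less_iff)
    then show ?thesis by simp
  qed
  then show ?thesis unfolding N_poly_def by (simp add: prod_pos)
qed

lemma fmap_M: "p \<in> hartogs polydisk N_poly \<mu> \<Longrightarrow> fmap p \<in> hartogs Omega3 N_Omega3 \<mu> \<and> fmap p \<in> U2 \<mu>"
  by (cases p) (auto simp: hartogs_def fmap_def U2_def NO_diag diag_Omega3 Npoly_pos)

definition w1 :: "'m::finite E2 \<Rightarrow> (complex^'m) \<times> complex" where
  "w1 w = ((\<chi> i. fst w $ i $ i), snd w)"

definition Ck :: "'m::finite \<Rightarrow> 'm E2 \<Rightarrow> 'm E2" where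
  "Ck k w = ((\<chi> i j. if i \<noteq> j \<and> (i = k \<or> j = k) then fst w $ i $ j else 0), 0)"

lemma Tk_Ck: "Tk k (Ck k w) = - Ck k w"
  by (auto simp: Tk_def Ck_def vec_eq_iff sg_def)

lemma decomp: "w = fmap (w1 w) + (\<Sum>k\<in>UNIV. (1/2) *\<^sub>R Ck k w)"
proof -
  have s: "snd (\<Sum>k\<in>UNIV. (1/2) *\<^sub>R Ck k w) = 0" by (simp add: snd_sum Ck_def)
  have f: "fst (\<Sum>k\<in>UNIV. (1/2) *\<^sub>R Ck k w) $ i $ j = (if i = j then 0 else fst w $ i $ j)" for i j
  proof -
    have "fst (\<Sum>k\<in>UNIV. (1/2) *\<^sub>R Ck k w) $ i $ j = (\<Sum>k\<in>UNIV. (1/2) *\<^sub>R (if i \<noteq> j \<and> (i = k \<or> j = k) then fst w $ i $ j else 0))"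
      by (simp add: fst_sum sum_component Ck_def)
    also have "\<dots> = (if i = j then 0 else fst w $ i $ j)"
    proof (cases "i = j")
      case True then show ?thesis by simp
    next
      case False
      have "(\<Sum>k\<in>UNIV. (1/2) *\<^sub>R (if i \<noteq> j \<and> (i = k \<or> j = k) then fst w $ i $ j else 0))
          = (\<Sum>k\<in>UNIV. (if k = i then (1/2) *\<^sub>R fst w $ i $ j else 0) + (if k = j then (1/2) *\<^sub>R fst w $ i $ j else 0))"
        by (rule sum.cong) (use False in auto)
      also have "\<dots> = fst w $ i $ j"
        by (simp add: sum.distrib scaleR_conv_of_real)
      finally show ?thesis using False by simp
    qed
    finally show ?thesis .
  qed
  show ?thesis
    by (cases w) (auto simp: prod_eq_iff vec_eq_iff fmap_def w1_def diag_map_def s f)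
qed




lemma zeroC:
  assumes P: "fmap p \<in> U2 \<mu>"
  shows "rmetric sc_tgt (hpot N_Omega3 \<mu>) (fmap p) (fmap u) (Ck k w) = 0"
proof -
  interpret T: scs "sc_tgt :: complex \<Rightarrow> 'm::finite E2 \<Rightarrow> _" by (rule scs_tgt)
  let ?R = "\<lambda>x. rmetric sc_tgt (hpot N_Omega3 \<mu>) (fmap p) (fmap u) x"
  have lin: "linear ?R" by (rule T.rmetric_linear[OF sm_psi2 U2_open P])
  have "?R (Ck k w) = rmetric sc_tgt (hpot N_Omega3 \<mu>) (Tk k (fmap p)) (Tk k (fmap u)) (Tk k (Ck k w))"
    by (rule rmetric_pull[of "Tk k" sc_tgt sc_tgt "hpot N_Omega3 \<mu>" "hpot N_Omega3 \<mu>", OF Tk_linear Tk_sc psi_Tk, symmetric])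
  also have "\<dots> = ?R (- Ck k w)" by (simp only: Tk_fmap Tk_Ck)
  also have "\<dots> = - ?R (Ck k w)" using lin by (simp add: linear_neg)
  finally show ?thesis by simp
qed

lemma metric_eq:
  assumes P: "fmap p \<in> U2 \<mu>"
  shows "rmetric sc_tgt (hpot N_Omega3 \<mu>) (fmap p) (fmap u) w = rmetric sc_src (hpot N_poly \<mu>) p u (w1 w)"
proof -
  interpret T: scs "sc_tgt :: complex \<Rightarrow> 'm::finite E2 \<Rightarrow> _" by (rule scs_tgt)
  let ?R = "\<lambda>x. rmetric sc_tgt (hpot N_Omega3 \<mu>) (fmap p) (fmap u) x"
  have lin: "linear ?R" by (rule T.rmetric_linear[OF sm_psi2 U2_open P])
  have "?R w = ?R (fmap (w1 w)) + (\<Sum>k\<in>UNIV. (1/2) * ?R (Ck k w))"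
    by (subst decomp[of w]) (simp add: linear_add[OF lin] linear_sum[OF lin] linear_scale[OF lin])
  also have "\<dots> = ?R (fmap (w1 w))" by (simp add: zeroC[OF P])
  also have "\<dots> = rmetric sc_src (hpot N_poly \<mu>) p u (w1 w)"
    by (rule rmetric_pull[of fmap sc_tgt sc_src "hpot N_Omega3 \<mu>" "hpot N_poly \<mu>", OF fmap_linear fmap_sc psi_fmap])
  finally show ?thesis .
qed

lemma der_eq:
  assumes P: "fmap p \<in> U2 \<mu>"
  shows "deriv (\<lambda>r. rmetric sc_tgt (hpot N_Omega3 \<mu>) (fmap p + r *\<^sub>R w) (fmap u) (fmap u)) 0
       = deriv (\<lambda>r. rmetric sc_src (hpot N_poly \<mu>) (p + r *\<^sub>R w1 w) u u) 0"
proof -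
  interpret T: scs "sc_tgt :: complex \<Rightarrow> 'm::finite E2 \<Rightarrow> _" by (rule scs_tgt)
  let ?q = "\<lambda>x. rmetric sc_tgt (hpot N_Omega3 \<mu>) x (fmap u) (fmap u)"
  obtain dq where lin: "linear dq" and dq: "\<And>v. deriv (\<lambda>r. ?q (fmap p + r *\<^sub>R v)) 0 = dq v"
    using T.rmetric_der[OF sm_psi2 U2_open P, of "fmap u"] by blast
  have qT: "?q (Tk k x) = ?q x" for k x
    using rmetric_pull[of "Tk k" sc_tgt sc_tgt "hpot N_Omega3 \<mu>" "hpot N_Omega3 \<mu>" x "fmap u" "fmap u", OF Tk_linear Tk_sc psi_Tk] by (simp only: Tk_fmap)
  have z: "dq (Ck k w) = 0" for k
  proof -
    have "(\<lambda>r. ?q (fmap p + r *\<^sub>R Ck k w)) = (\<lambda>r. ?q (fmap p + r *\<^sub>R (- Ck k w)))"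
    proof
      fix r
      have "?q (fmap p + r *\<^sub>R Ck k w) = ?q (Tk k (fmap p + r *\<^sub>R Ck k w))" by (rule qT[symmetric])
      also have "Tk k (fmap p + r *\<^sub>R Ck k w) = fmap p + r *\<^sub>R (- Ck k w)"
        using Tk_linear[of k] by (simp add: linear_add linear_scale Tk_fmap Tk_Ck)
      finally show "?q (fmap p + r *\<^sub>R Ck k w) = ?q (fmap p + r *\<^sub>R (- Ck k w))" .
    qed
    note fe = this
    have "dq (Ck k w) = deriv (\<lambda>r. ?q (fmap p + r *\<^sub>R Ck k w)) 0" by (rule dq[symmetric])
    also have "\<dots> = deriv (\<lambda>r. ?q (fmap p + r *\<^sub>R (- Ck k w))) 0" by (simp only: fe)
    also have "\<dots> = dq (- Ck k w)" by (rule dq)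
    also have "\<dots> = - dq (Ck k w)" using lin by (simp add: linear_neg)
    finally show ?thesis by simp
  qed
  have "deriv (\<lambda>r. ?q (fmap p + r *\<^sub>R w)) 0 = dq w" by (rule dq)
  also have "\<dots> = dq (fmap (w1 w)) + (\<Sum>k\<in>UNIV. (1/2) * dq (Ck k w))"
    by (subst decomp[of w]) (simp add: linear_add[OF lin] linear_sum[OF lin] linear_scale[OF lin])
  also have "\<dots> = dq (fmap (w1 w))" by (simp add: z)
  also have "\<dots> = deriv (\<lambda>r. ?q (fmap p + r *\<^sub>R fmap (w1 w))) 0" by (rule dq[symmetric])
  also have "(\<lambda>r. ?q (fmap p + r *\<^sub>R fmap (w1 w))) = (\<lambda>r. rmetric sc_src (hpot N_poly \<mu>) (p + r *\<^sub>R w1 w) u u)"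
  proof
    fix r
    have fe2: "fmap p + r *\<^sub>R fmap (w1 w) = fmap (p + r *\<^sub>R w1 w)"
      by (simp only: linear_add[OF fmap_linear] linear_scale[OF fmap_linear])
    show "?q (fmap p + r *\<^sub>R fmap (w1 w)) = rmetric sc_src (hpot N_poly \<mu>) (p + r *\<^sub>R w1 w) u u"
      unfolding fe2 by (rule rmetric_pull[of fmap sc_tgt sc_src "hpot N_Omega3 \<mu>" "hpot N_poly \<mu>", OF fmap_linear fmap_sc psi_fmap])
  qed
  finally show ?thesis .
qed




lemma K2: "holo_on sc_src sc_tgt (hartogs polydisk N_poly \<mu>) (fmap :: (complex^'m::finite) \<times> complex \<Rightarrow> _)"
  unfolding holo_on_def
proof
  fix p :: "(complex^'m) \<times> complex"
  assume "p \<in> hartogs polydisk N_poly \<mu>"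
  have hd: "(fmap has_derivative fmap) (at p)"
    by (rule bounded_linear_imp_has_derivative[OF fmap_blin])
  show "\<exists>L. (fmap has_derivative L) (at p) \<and> (\<forall>c v. L (sc_src c v) = sc_tgt c (L v))"
    by (rule exI, rule conjI, rule hd, intro allI, rule fmap_sc[symmetric])
qed

lemma K1: "(fmap :: (complex^'m::finite) \<times> complex \<Rightarrow> _) ` hartogs polydisk N_poly \<mu> \<subseteq> hartogs Omega3 N_Omega3 \<mu>"
proof
  fix y assume "y \<in> (fmap :: (complex^'m::finite) \<times> complex \<Rightarrow> _) ` hartogs polydisk N_poly \<mu>"
  then obtain x where "x \<in> hartogs polydisk N_poly \<mu>" "y = fmap x" by blast
  then show "y \<in> hartogs Omega3 N_Omega3 \<mu>" using fmap_M[of x \<mu>] by simp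
qed

lemma K3:
  fixes p v :: "(complex^'m::finite) \<times> complex"
  assumes "(fmap has_derivative L) (at p)"
  shows "kform sc_tgt (hpot N_Omega3 \<mu>) (fmap p) (L v) = kform sc_src (hpot N_poly \<mu>) p v"
proof -
  have hd: "(fmap has_derivative fmap) (at p)"
    by (rule bounded_linear_imp_has_derivative[OF fmap_blin])
  have "L = fmap" using hd assms has_derivative_unique by blast
  moreover have "kform sc_tgt (hpot N_Omega3 \<mu>) (fmap p) (fmap v) = kform sc_src (hpot N_poly \<mu>) p v"
    by (rule kform_pull[of fmap sc_tgt sc_src "hpot N_Omega3 \<mu>" "hpot N_poly \<mu>", OF linear_add[OF fmap_linear] fmap_sc psi_fmap])
  ultimately show ?thesis by simp
qed

lemma Klem: "kahler_immersion (hartogs polydisk N_poly \<mu>) UNIV sc_src (hpot N_poly \<mu>)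
           (hartogs Omega3 N_Omega3 \<mu>) sc_tgt (hpot N_Omega3 \<mu>) (fmap :: (complex^'m::finite) \<times> complex \<Rightarrow> _)"
  unfolding kahler_immersion_def
proof (intro conjI K1 K2 ballI allI impI)
  fix p L v
  assume "((fmap :: (complex^'m::finite) \<times> complex \<Rightarrow> _) has_derivative L) (at p)"
  then show "kform sc_tgt (hpot N_Omega3 \<mu>) (fmap p) (L v) = kform sc_src (hpot N_poly \<mu>) p v"
    by (rule K3)
qed

lemma Glem: "totally_geodesic
           (hartogs polydisk N_poly \<mu>) UNIV (rmetric sc_src (hpot N_poly \<mu>))
           (hartogs Omega3 N_Omega3 \<mu>) sym_tangent (rmetric sc_tgt (hpot N_Omega3 \<mu>)) (fmap :: (complex^'m::finite) \<times> complex \<Rightarrow> _)"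
    unfolding totally_geodesic_def
  proof (intro allI impI)
    fix \<gamma> :: "real \<Rightarrow> (complex^'m) \<times> complex" and a b :: real
    assume "geodesic (hartogs polydisk N_poly \<mu>) UNIV (rmetric sc_src (hpot N_poly \<mu>)) \<gamma> a b"
    then obtain \<gamma>' where ab: "a < b" and inM: "\<And>t. t \<in> {a<..<b} \<Longrightarrow> \<gamma> t \<in> hartogs polydisk N_poly \<mu>"
      and vd: "\<And>t. t \<in> {a<..<b} \<Longrightarrow> (\<gamma> has_vector_derivative \<gamma>' t) (at t)"
      and EL: "\<And>t w. t \<in> {a<..<b} \<Longrightarrow> ((\<lambda>s. rmetric sc_src (hpot N_poly \<mu>) (\<gamma> s) (\<gamma>' s) w) has_real_derivative
                  (deriv (\<lambda>r. rmetric sc_src (hpot N_poly \<mu>) (\<gamma> t + r *\<^sub>R w) (\<gamma>' t) (\<gamma>' t)) 0 / 2)) (at t)"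
      unfolding geodesic_def by blast
    show "geodesic (hartogs Omega3 N_Omega3 \<mu>) sym_tangent (rmetric sc_tgt (hpot N_Omega3 \<mu>)) (fmap \<circ> \<gamma>) a b"
      unfolding geodesic_def
    proof (intro conjI ballI exI[of _ "\<lambda>t. fmap (\<gamma>' t)"])
      show "a < b" by (rule ab)
      fix t assume t: "t \<in> {a<..<b}"
      show "(fmap \<circ> \<gamma>) t \<in> hartogs Omega3 N_Omega3 \<mu>" using fmap_M[OF inM[OF t]] by simp
      show "(fmap \<circ> \<gamma> has_vector_derivative fmap (\<gamma>' t)) (at t)"
      proof -
        have "((\<lambda>s. fmap (\<gamma> s)) has_derivative (\<lambda>x. fmap (x *\<^sub>R \<gamma>' t))) (at t)"
          using bounded_linear.has_derivative[OF fmap_blin vd[OF t, unfolded has_vector_derivative_def]] .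
        moreover have "(\<lambda>x. fmap (x *\<^sub>R \<gamma>' t)) = (\<lambda>x. x *\<^sub>R fmap (\<gamma>' t))"
          by (simp only: linear_scale[OF fmap_linear])
        ultimately show ?thesis unfolding has_vector_derivative_def o_def by simp
      qed
      show "fmap (\<gamma>' t) \<in> sym_tangent"
        by (cases "\<gamma>' t") (simp add: sym_tangent_def fmap_def transpose_def diag_map_def vec_eq_iff)
      fix w :: "'m E2"
      assume "w \<in> sym_tangent"
      have P: "fmap (\<gamma> s) \<in> U2 \<mu>" if "s \<in> {a<..<b}" for s using fmap_M[OF inM[OF that]] by simp
      have eqL: "rmetric sc_src (hpot N_poly \<mu>) (\<gamma> s) (\<gamma>' s) (w1 w) =
                 rmetric sc_tgt (hpot N_Omega3 \<mu>) ((fmap \<circ> \<gamma>) s) (fmap (\<gamma>' s)) w" if "s \<in> {a<..<b}" for s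
        using metric_eq[OF P[OF that]] by simp
      have "((\<lambda>s. rmetric sc_tgt (hpot N_Omega3 \<mu>) ((fmap \<circ> \<gamma>) s) (fmap (\<gamma>' s)) w) has_real_derivative
                  (deriv (\<lambda>r. rmetric sc_src (hpot N_poly \<mu>) (\<gamma> t + r *\<^sub>R w1 w) (\<gamma>' t) (\<gamma>' t)) 0 / 2)) (at t)"
        by (rule has_field_derivative_transform_within_open[OF EL[OF t] open_greaterThanLessThan t eqL])
      moreover have "deriv (\<lambda>r. rmetric sc_src (hpot N_poly \<mu>) (\<gamma> t + r *\<^sub>R w1 w) (\<gamma>' t) (\<gamma>' t)) 0
          = deriv (\<lambda>r. rmetric sc_tgt (hpot N_Omega3 \<mu>) ((fmap \<circ> \<gamma>) t + r *\<^sub>R w) (fmap (\<gamma>' t)) (fmap (\<gamma>' t))) 0"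
        using der_eq[OF P[OF t]] by simp
      ultimately show "((\<lambda>s. rmetric sc_tgt (hpot N_Omega3 \<mu>) ((fmap \<circ> \<gamma>) s) (fmap (\<gamma>' s)) w) has_real_derivative
                  (deriv (\<lambda>r. rmetric sc_tgt (hpot N_Omega3 \<mu>) ((fmap \<circ> \<gamma>) t + r *\<^sub>R w) (fmap (\<gamma>' t)) (fmap (\<gamma>' t))) 0 / 2)) (at t)"
        by simp
    qed
  qed


theorem lemma3p4:
  fixes \<mu> :: real
  assumes "\<mu> > 0"
  defines "f \<equiv> (\<lambda>(z, w). (diag_map z, w)) :: (complex^'m) \<times> complex \<Rightarrow> (complex^'m^'m) \<times> complex"
  shows "kahler_immersion (hartogs polydisk N_poly \<mu>) UNIV sc_src (hpot N_poly \<mu>)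
           (hartogs Omega3 N_Omega3 \<mu>) sc_tgt (hpot N_Omega3 \<mu>) f
       \<and> totally_geodesic
           (hartogs polydisk N_poly \<mu>) UNIV (rmetric sc_src (hpot N_poly \<mu>))
           (hartogs Omega3 N_Omega3 \<mu>) sym_tangent (rmetric sc_tgt (hpot N_Omega3 \<mu>)) f"
proof -
  have ff: "f = fmap" unfolding f_def fmap_def ..
  show ?thesis unfolding ff using Klem Glem by blast
qed


end
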